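(* There exists a constant $L>0$ such that for all symmetric matrices $Q,\delta Q\in\mathbb{R}^{3\times3}$, $|P(Q+\delta Q)-P(Q)|_F\le L\,|\delta Q|_F$.
   Context: Let $a,b\in\mathbb{R}$, $c>0$, and $A_0>0$ such that $\inf\{\frac a2\operatorname{tr}(Q^2)-\frac b3\operatorname{tr}(Q^3)+\frac c4(\operatorname{tr}(Q^2))^2+A_0:\ Q\in\mathbb{R}^{3\times3}\text{ symmetric}\}>0$. For symmetric $Q\in\mathbb{R}^{3\times3}$ define $r(Q)=\sqrt{2\big(\frac a2\operatorname{tr}(Q^2)-\frac b3\operatorname{tr}(Q^3)+\frac c4(\operatorname{tr}(Q^2))^2+A_0\big)}$, $S(Q)=aQ-b\big(Q^2-\frac13\operatorname{tr}(Q^2)I\big)+c\operatorname{tr}(Q^2)Q$, and $P(Q)=S(Q)/r(Q)$. $|A|_F=\sqrt{\sum_{i,j}A_{ij}^2}$ is the Frobenius norm. *)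

theory Defs
  imports "HOL-Analysis.Analysis"
begin

definition sym_mat :: "real^3^3 \<Rightarrow> bool" where
  "sym_mat Q \<longleftrightarrow> transpose Q = Q"

definition frob :: "real^3^3 \<Rightarrow> real" where
  "frob A = sqrt (\<Sum>i\<in>UNIV. \<Sum>j\<in>UNIV. (A $ i $ j)^2)"

definition ldg_f :: "real \<Rightarrow> real \<Rightarrow> real \<Rightarrow> real \<Rightarrow> real^3^3 \<Rightarrow> real" where
  "ldg_f a b c A0 Q = a / 2 * trace (Q ** Q) - b / 3 * trace (Q ** Q ** Q)
     + c / 4 * (trace (Q ** Q))^2 + A0"

definition ldg_r :: "real \<Rightarrow> real \<Rightarrow> real \<Rightarrow> real \<Rightarrow> real^3^3 \<Rightarrow> real" where
  "ldg_r a b c A0 Q = sqrt (2 * ldg_f a b c A0 Q)"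

definition ldg_S :: "real \<Rightarrow> real \<Rightarrow> real \<Rightarrow> real^3^3 \<Rightarrow> real^3^3" where
  "ldg_S a b c Q = a *\<^sub>R Q - b *\<^sub>R (Q ** Q - (trace (Q ** Q) / 3) *\<^sub>R mat 1)
     + (c * trace (Q ** Q)) *\<^sub>R Q"

definition ldg_P :: "real \<Rightarrow> real \<Rightarrow> real \<Rightarrow> real \<Rightarrow> real^3^3 \<Rightarrow> real^3^3" where
  "ldg_P a b c A0 Q = (1 / ldg_r a b c A0 Q) *\<^sub>R ldg_S a b c Q"

end

theory Submission
  imports Defs
begin
lemma frob_eq_norm: "frob A = norm A"
  unfolding frob_def norm_vec_def L2_set_def by (simp add: sum_nonneg)
lemma norm_sq_mat: "norm (A::real^3^3)^2 = (\<Sum>i\<in>UNIV. \<Sum>j\<in>UNIV. (A$i$j)^2)"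
proof -
  have "norm A ^ 2 = frob A ^ 2" by (simp add: frob_eq_norm)
  also have "\<dots> = (\<Sum>i\<in>UNIV. \<Sum>j\<in>UNIV. (A$i$j)^2)" unfolding frob_def
    by (simp add: sum_nonneg)
  finally show ?thesis .
qed
lemma norm_sq_vec: "norm (x::real^3)^2 = (\<Sum>i\<in>UNIV. (x$i)^2)"
  unfolding norm_vec_def L2_set_def by (simp add: sum_nonneg)
lemma mm_entry: "(X ** Y)$i$j = (X$i) \<bullet> (column j Y)"
  by (simp add: matrix_matrix_mult_def inner_vec_def column_def mult.commute)
lemma mult_norm: "norm ((X::real^3^3) ** (Y::real^3^3)) \<le> norm X * norm Y"
proof -
  have "norm (X**Y)^2 = (\<Sum>i\<in>UNIV. \<Sum>j\<in>UNIV. ((X$i) \<bullet> column j Y)^2)"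
    unfolding norm_sq_mat[of "X**Y"] mm_entry by (rule refl)
  also have "\<dots> \<le> (\<Sum>i\<in>UNIV. \<Sum>j\<in>UNIV. norm(X$i)^2 * norm(column j Y)^2)"
    apply (intro sum_mono)
    by (simp add: Cauchy_Schwarz_ineq power2_norm_eq_inner)
  also have "\<dots> = (\<Sum>i\<in>UNIV. norm(X$i)^2) * (\<Sum>j\<in>UNIV. norm(column j Y)^2)"
    by (simp only: sum_product)
  also have "\<dots> = norm X^2 * norm Y^2"
  proof -
    have 1: "(\<Sum>i\<in>UNIV. norm(X$i)^2) = norm X^2" by (simp only: norm_sq_mat norm_sq_vec)
    have "(\<Sum>j\<in>UNIV. norm(column j Y)^2) = (\<Sum>j\<in>UNIV. \<Sum>i\<in>UNIV. (Y$i$j)^2)"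
      by (simp only: norm_sq_vec column_def vec_lambda_beta)
    also have "\<dots> = norm Y^2" unfolding norm_sq_mat by (rule sum.swap)
    finally show ?thesis using 1 by (simp only:)
  qed
  finally have "norm (X**Y)^2 \<le> (norm X * norm Y)^2" by (simp only: power_mult_distrib)
  thus ?thesis by (rule power2_le_imp_le) simp
qed
lemma trace_abs: "\<bar>trace (X::real^3^3)\<bar> \<le> 3 * norm X"
proof -
  have "\<bar>trace X\<bar> \<le> (\<Sum>i\<in>UNIV. \<bar>X$i$i\<bar>)" unfolding trace_def by (rule sum_abs)
  also have "\<dots> \<le> (\<Sum>i\<in>(UNIV::3 set). norm X)"
  proof (rule sum_mono)
    fix i :: 3
    have "\<bar>X$i$i\<bar> \<le> norm (X$i)" by (rule component_le_norm_cart)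
    also have "\<dots> \<le> norm X" by (rule Finite_Cartesian_Product.norm_nth_le)
    finally show "\<bar>X$i$i\<bar> \<le> norm X" .
  qed
  also have "\<dots> = 3 * norm X" by simp
  finally show ?thesis .
qed
lemma tr_sym: "sym_mat Q \<Longrightarrow> trace (Q ** Q) = norm Q ^ 2"
proof -
  assume "sym_mat Q"
  hence h: "transpose Q = Q" unfolding sym_mat_def .
  have s: "Q$j$i = Q$i$j" for i j
  proof -
    have "Q$j$i = transpose Q $ j $ i" using h by simp
    also have "\<dots> = Q$i$j" by (simp add: transpose_def)
    finally show ?thesis .
  qed
  have "trace (Q ** Q) = (\<Sum>i\<in>UNIV. \<Sum>k\<in>UNIV. Q$i$k * Q$k$i)"
    unfolding trace_def matrix_matrix_mult_def by (simp only: vec_lambda_beta)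
  also have "\<dots> = (\<Sum>i\<in>UNIV. \<Sum>k\<in>UNIV. (Q$i$k)^2)"
    by (intro sum.cong refl) (simp only: s[of _ i for i] power2_eq_square)
  finally show ?thesis by (simp only: norm_sq_mat)
qed
lemma norm_id: "norm (mat 1 :: real^3^3) \<le> 2"
proof -
  have e: "((mat 1 :: real^3^3)$i$j)^2 = (if i = j then 1 else 0)" for i j :: 3
    by (cases "i = j") (simp_all only: mat_def vec_lambda_beta if_True if_False power2_eq_square mult_1 mult_zero_left simp_thms)
  have r: "(\<Sum>j\<in>UNIV. ((mat 1 :: real^3^3)$i$j)^2) = 1" for i :: 3
    by (simp only: e sum.delta' finite UNIV_I if_True)
  have "norm (mat 1 :: real^3^3)^2 = (\<Sum>i\<in>UNIV. \<Sum>j\<in>UNIV. ((mat 1 :: real^3^3)$i$j)^2)"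
    by (rule norm_sq_mat)
  also have "\<dots> = (\<Sum>i\<in>(UNIV::3 set). 1)" by (simp only: r)
  also have "\<dots> = 3" by simp
  finally have "norm (mat 1 :: real^3^3)^2 \<le> 2^2" by simp
  thus ?thesis by (rule power2_le_imp_le) simp
qed
lemma sym_add: "sym_mat A \<Longrightarrow> sym_mat B \<Longrightarrow> sym_mat (A + B)"
  by (simp add: sym_mat_def transpose_def vec_eq_iff)
lemma sym_minus: "sym_mat A \<Longrightarrow> sym_mat (- A)"
  by (simp add: sym_mat_def transpose_def vec_eq_iff)

lemma mm_ldiff: "(A::real^3^3) ** (B - C) = A ** B - A ** C"
  by (simp add: matrix_matrix_mult_def vec_eq_iff sum_subtractf right_diff_distrib)
lemma mm_rdiff: "((B::real^3^3) - C) ** A = B ** A - C ** A"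
  by (simp add: matrix_matrix_mult_def vec_eq_iff sum_subtractf left_diff_distrib)
lemma sq_diff: "(B::real^3^3) ** B - A ** A = B ** (B - A) + (B - A) ** A"
  by (simp add: mm_ldiff mm_rdiff)
lemma cube_diff: "(B::real^3^3) ** B ** B - A ** A ** A
   = (B ** B) ** (B - A) + (B ** (B - A)) ** A + ((B - A) ** A) ** A"
  by (simp add: mm_ldiff mm_rdiff)

lemma basic_est:
  fixes A B :: "real^3^3"
  assumes nA: "norm A \<le> \<rho>" and nB: "norm B \<le> \<rho>" and r1: "1 \<le> \<rho>"
  shows "norm (B ** B - A ** A) \<le> 2 * \<rho> * norm (B - A)"
    and "\<bar>trace (B ** B) - trace (A ** A)\<bar> \<le> 6 * \<rho> * norm (B - A)"
    and "\<bar>trace (B ** B)\<bar> \<le> 3 * \<rho>^2"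
    and "\<bar>trace (A ** A)\<bar> \<le> 3 * \<rho>^2"
    and "norm (B ** B ** B - A ** A ** A) \<le> 3 * \<rho>^2 * norm (B - A)"
proof -
  let ?d = "norm (B - A)"
  have d0: "0 \<le> ?d" by simp
  have "norm (B ** B - A ** A) \<le> norm (B ** (B - A)) + norm ((B - A) ** A)"
    unfolding sq_diff by (rule norm_triangle_ineq)
  also have "\<dots> \<le> norm B * ?d + ?d * norm A" by (intro add_mono mult_norm)
  also have "\<dots> \<le> \<rho> * ?d + ?d * \<rho>" by (intro add_mono mult_right_mono mult_left_mono nA nB d0)
  finally show 1: "norm (B ** B - A ** A) \<le> 2 * \<rho> * ?d" by simp
  have "\<bar>trace (B ** B) - trace (A ** A)\<bar> \<le> 3 * norm (B ** B - A ** A)"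
    unfolding trace_sub[symmetric] by (rule trace_abs)
  thus "\<bar>trace (B ** B) - trace (A ** A)\<bar> \<le> 6 * \<rho> * ?d" using 1 by simp
  have n0: "0 \<le> \<rho>" using r1 by simp
  have "norm (B ** B) \<le> \<rho>^2"
    using mult_norm[of B B] mult_mono[OF nB nB n0 norm_ge_zero] by (simp add: power2_eq_square)
  thus "\<bar>trace (B ** B)\<bar> \<le> 3 * \<rho>^2" using trace_abs[of "B ** B"] by simp
  have "norm (A ** A) \<le> \<rho>^2"
    using mult_norm[of A A] mult_mono[OF nA nA n0 norm_ge_zero] by (simp add: power2_eq_square)
  thus "\<bar>trace (A ** A)\<bar> \<le> 3 * \<rho>^2" using trace_abs[of "A ** A"] by simp
  have "norm (B ** B ** B - A ** A ** A) \<le> norm ((B ** B) ** (B - A)) + norm ((B ** (B - A)) ** A) + norm (((B - A) ** A) ** A)"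
    unfolding cube_diff by (rule order_trans[OF norm_triangle_ineq add_right_mono[OF norm_triangle_ineq]])
  also have "\<dots> \<le> (norm B * norm B) * ?d + (norm B * ?d) * norm A + (?d * norm A) * norm A"
    by (intro add_mono order_trans[OF mult_norm] mult_right_mono mult_left_mono mult_norm norm_ge_zero)
  also have "\<dots> \<le> (\<rho> * \<rho>) * ?d + (\<rho> * ?d) * \<rho> + (?d * \<rho>) * \<rho>"
    by (intro add_mono mult_mono nA nB d0 n0 order_refl mult_nonneg_nonneg norm_ge_zero)
  finally show "norm (B ** B ** B - A ** A ** A) \<le> 3 * \<rho>^2 * ?d"
    by (simp add: power2_eq_square algebra_simps)
qed

lemma norm4: "norm (x - y + z + w) \<le> norm x + norm y + norm z + norm (w::'a::real_normed_vector)"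
proof -
  have "norm (x - y + z + w) \<le> norm (x - y + z) + norm w" by (rule norm_triangle_ineq)
  moreover have "norm (x - y + z) \<le> norm (x - y) + norm z" by (rule norm_triangle_ineq)
  moreover have "norm (x - y) \<le> norm x + norm y" by (rule norm_triangle_ineq4)
  ultimately show ?thesis by linarith
qed

lemma arithS:
  fixes a b c d \<rho> N1 T nI N4 :: real
  assumes r1: "1 \<le> \<rho>" and d0: "0 \<le> d" and N1: "N1 \<le> 2*\<rho>*d" and T: "T \<le> 6*\<rho>*d" and T0: "0 \<le> T"
    and nI: "nI \<le> 2" and nI0: "0 \<le> nI" and N4: "N4 \<le> 9*\<rho>^2*d"
  shows "\<bar>a\<bar>*d + \<bar>b\<bar>*N1 + \<bar>b\<bar>*T/3*nI + \<bar>c\<bar>*N4 \<le> (\<bar>a\<bar> + 6*\<bar>b\<bar> + 9*\<bar>c\<bar>) * \<rho>^2 * d"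
proof -
  have rr: "\<rho> \<le> \<rho>^2" using r1 by (simp add: power2_eq_square)
  have r2: "1 \<le> \<rho>^2" using r1 rr by linarith
  have "d \<le> \<rho>^2 * d" using mult_right_mono[OF r2 d0] by simp
  hence t1: "\<bar>a\<bar>*d \<le> \<bar>a\<bar>*(\<rho>^2*d)" by (rule mult_left_mono) simp
  have "\<rho>*d \<le> \<rho>^2*d" using mult_right_mono[OF rr d0] .
  hence "N1 \<le> 2*(\<rho>^2*d)" using N1 by linarith
  hence t2: "\<bar>b\<bar>*N1 \<le> \<bar>b\<bar>*(2*(\<rho>^2*d))" by (rule mult_left_mono) simp
  have "T*nI \<le> (6*\<rho>*d)*2" by (rule mult_mono[OF T nI _ nI0]) (use r1 d0 in simp)
  hence "T*nI/3 \<le> 4*(\<rho>^2*d)" using \<open>\<rho>*d \<le> \<rho>^2*d\<close> by linarith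
  hence t3: "\<bar>b\<bar>*(T*nI/3) \<le> \<bar>b\<bar>*(4*(\<rho>^2*d))" by (rule mult_left_mono) simp
  have t4: "\<bar>c\<bar>*N4 \<le> \<bar>c\<bar>*(9*(\<rho>^2*d))" using N4 by (intro mult_left_mono) (simp_all add: mult.assoc)
  have e: "\<bar>b\<bar>*T/3*nI = \<bar>b\<bar>*(T*nI/3)" by simp
  show ?thesis unfolding e using t1 t2 t3 t4 by (simp add: algebra_simps)
qed

lemma S_diff:
  fixes A B :: "real^3^3"
  assumes nA: "norm A \<le> \<rho>" and nB: "norm B \<le> \<rho>" and r1: "1 \<le> \<rho>"
  shows "norm (ldg_S a b c B - ldg_S a b c A) \<le> (\<bar>a\<bar> + 6*\<bar>b\<bar> + 9*\<bar>c\<bar>) * \<rho>^2 * norm (B - A)"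
proof -
  define d where "d = norm (B - A)"
  define tA where "tA = trace (A ** A)"
  define tB where "tB = trace (B ** B)"
  note e = basic_est[OF nA nB r1, folded d_def tA_def tB_def]
  have d0: "0 \<le> d" unfolding d_def by simp
  have n0: "0 \<le> \<rho>" using r1 by simp
  have h4: "norm (tB *\<^sub>R B - tA *\<^sub>R A) \<le> 9 * \<rho>^2 * d"
  proof -
    have eq1: "tB *\<^sub>R B - tA *\<^sub>R A = tB *\<^sub>R (B - A) + (tB - tA) *\<^sub>R A"
      by (simp add: algebra_simps)
    have "norm (tB *\<^sub>R B - tA *\<^sub>R A) \<le> norm (tB *\<^sub>R (B - A)) + norm ((tB - tA) *\<^sub>R A)"
      unfolding eq1 by (rule norm_triangle_ineq)
    also have "\<dots> = \<bar>tB\<bar> * d + \<bar>tB - tA\<bar> * norm A" unfolding d_def by (simp only: norm_scaleR)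
    finally have 1: "norm (tB *\<^sub>R B - tA *\<^sub>R A) \<le> \<bar>tB\<bar> * d + \<bar>tB - tA\<bar> * norm A" .
    have 2: "\<bar>tB\<bar> * d \<le> (3 * \<rho>^2) * d" by (rule mult_right_mono[OF e(3) d0])
    have 3: "\<bar>tB - tA\<bar> * norm A \<le> (6 * \<rho> * d) * \<rho>" by (rule mult_mono[OF e(2) nA]) (use n0 d0 in simp_all)
    have 4: "(3 * \<rho>^2) * d + (6 * \<rho> * d) * \<rho> = 9 * \<rho>^2 * d" by (simp add: power2_eq_square algebra_simps)
    show ?thesis using 1 2 3 4 by linarith
  qed
  have eq: "ldg_S a b c B - ldg_S a b c A = a *\<^sub>R (B - A) - b *\<^sub>R (B ** B - A ** A)
      + (b * (tB - tA) / 3) *\<^sub>R mat 1 + c *\<^sub>R (tB *\<^sub>R B - tA *\<^sub>R A)"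
    unfolding ldg_S_def tA_def tB_def by (simp add: algebra_simps diff_divide_distrib)
  have "norm (ldg_S a b c B - ldg_S a b c A) \<le> norm (a *\<^sub>R (B - A)) + norm (b *\<^sub>R (B ** B - A ** A))
      + norm ((b * (tB - tA) / 3) *\<^sub>R (mat 1::real^3^3)) + norm (c *\<^sub>R (tB *\<^sub>R B - tA *\<^sub>R A))"
    unfolding eq by (rule norm4)
  also have "\<dots> = \<bar>a\<bar> * d + \<bar>b\<bar> * norm (B ** B - A ** A) + \<bar>b\<bar> * \<bar>tB - tA\<bar> / 3 * norm (mat 1::real^3^3)
      + \<bar>c\<bar> * norm (tB *\<^sub>R B - tA *\<^sub>R A)"
    unfolding d_def by (simp only: norm_scaleR abs_mult abs_divide abs_numeral)
  also have "\<dots> \<le> (\<bar>a\<bar> + 6*\<bar>b\<bar> + 9*\<bar>c\<bar>) * \<rho>^2 * d"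
    by (rule arithS[OF r1 d0 e(1) e(2) abs_ge_zero norm_id norm_ge_zero h4])
  finally show ?thesis unfolding d_def .
qed

lemma abs3: "\<bar>(x::real) - y + z\<bar> \<le> \<bar>x\<bar> + \<bar>y\<bar> + \<bar>z\<bar>"
  by arith

lemma arithF:
  fixes a b c d \<rho> T U V :: real
  assumes r1: "1 \<le> \<rho>" and d0: "0 \<le> d" and T: "T \<le> 6*\<rho>*d" and U: "U \<le> 9*\<rho>^2*d" and V: "V \<le> (6*\<rho>*d)*(6*\<rho>^2)"
  shows "\<bar>a/2\<bar>*T + \<bar>b/3\<bar>*U + \<bar>c/4\<bar>*V \<le> (3*\<bar>a\<bar> + 3*\<bar>b\<bar> + 9*\<bar>c\<bar>) * \<rho>^3 * d"
proof -
  have n0: "0 \<le> \<rho>" using r1 by simp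
  have p1: "\<rho> \<le> \<rho>^3" using r1 by (simp add: power3_eq_cube) (metis mult_le_cancel_left1 mult_mono' n0 order.trans less_eq_real_def one_le_power power2_eq_square r1 linorder_not_le zero_le_one)
  have p2: "\<rho>^2 \<le> \<rho>^3" using r1 by (simp add: power3_eq_cube power2_eq_square)
  have "\<rho>*d \<le> \<rho>^3*d" by (rule mult_right_mono[OF p1 d0])
  hence "T \<le> 6*(\<rho>^3*d)" using T by linarith
  hence t1: "\<bar>a/2\<bar>*T \<le> \<bar>a/2\<bar>*(6*(\<rho>^3*d))" by (rule mult_left_mono) simp
  have "\<rho>^2*d \<le> \<rho>^3*d" by (rule mult_right_mono[OF p2 d0])
  hence "U \<le> 9*(\<rho>^3*d)" using U by linarith
  hence t2: "\<bar>b/3\<bar>*U \<le> \<bar>b/3\<bar>*(9*(\<rho>^3*d))" by (rule mult_left_mono) simp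
  have "(6*\<rho>*d)*(6*\<rho>^2) = 36*(\<rho>^3*d)" by (simp add: power2_eq_square power3_eq_cube)
  hence "V \<le> 36*(\<rho>^3*d)" using V by linarith
  hence t3: "\<bar>c/4\<bar>*V \<le> \<bar>c/4\<bar>*(36*(\<rho>^3*d))" by (rule mult_left_mono) simp
  show ?thesis using t1 t2 t3 by (simp add: algebra_simps)
qed

lemma f_diff:
  fixes A B :: "real^3^3"
  assumes nA: "norm A \<le> \<rho>" and nB: "norm B \<le> \<rho>" and r1: "1 \<le> \<rho>"
  shows "\<bar>ldg_f a b c A0 B - ldg_f a b c A0 A\<bar> \<le> (3*\<bar>a\<bar> + 3*\<bar>b\<bar> + 9*\<bar>c\<bar>) * \<rho>^3 * norm (B - A)"
proof -
  define d where "d = norm (B - A)"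
  define tA where "tA = trace (A ** A)"
  define tB where "tB = trace (B ** B)"
  define sA where "sA = trace (A ** A ** A)"
  define sB where "sB = trace (B ** B ** B)"
  note e = basic_est[OF nA nB r1, folded d_def tA_def tB_def]
  have d0: "0 \<le> d" unfolding d_def by simp
  have n0: "0 \<le> \<rho>" using r1 by simp
  have h3: "\<bar>sB - sA\<bar> \<le> 9 * \<rho>^2 * d"
  proof -
    have "\<bar>sB - sA\<bar> \<le> 3 * norm (B ** B ** B - A ** A ** A)"
      unfolding sA_def sB_def trace_sub[symmetric] by (rule trace_abs)
    thus ?thesis using e(5) by linarith
  qed
  have h5: "\<bar>tB^2 - tA^2\<bar> \<le> (6 * \<rho> * d) * (6 * \<rho>^2)"
  proof -
    have "tB^2 - tA^2 = (tB - tA) * (tB + tA)" by (simp add: power2_eq_square algebra_simps)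
    hence "\<bar>tB^2 - tA^2\<bar> = \<bar>tB - tA\<bar> * \<bar>tB + tA\<bar>" by (simp only: abs_mult)
    moreover have "\<bar>tB + tA\<bar> \<le> 6 * \<rho>^2" using e(3,4) by linarith
    moreover have "\<bar>tB - tA\<bar> * \<bar>tB + tA\<bar> \<le> (6 * \<rho> * d) * (6 * \<rho>^2)"
      by (rule mult_mono[OF e(2) \<open>\<bar>tB + tA\<bar> \<le> 6 * \<rho>^2\<close>]) (use n0 d0 in simp_all)
    ultimately show ?thesis by linarith
  qed
  have eq: "ldg_f a b c A0 B - ldg_f a b c A0 A = a/2 * (tB - tA) - b/3 * (sB - sA) + c/4 * (tB^2 - tA^2)"
    unfolding ldg_f_def tA_def tB_def sA_def sB_def by (simp add: algebra_simps)
  have "\<bar>ldg_f a b c A0 B - ldg_f a b c A0 A\<bar> \<le> \<bar>a/2\<bar> * \<bar>tB - tA\<bar> + \<bar>b/3\<bar> * \<bar>sB - sA\<bar> + \<bar>c/4\<bar> * \<bar>tB^2 - tA^2\<bar>"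
    unfolding eq abs_mult[symmetric] by (rule abs3)
  also have "\<dots> \<le> (3*\<bar>a\<bar> + 3*\<bar>b\<bar> + 9*\<bar>c\<bar>) * \<rho>^3 * d"
    by (rule arithF[OF r1 d0 e(2) h3 h5])
  finally show ?thesis unfolding d_def .
qed

lemma norm3: "norm (x - y + z) \<le> norm x + norm y + norm (z::'a::real_normed_vector)"
proof -
  have "norm (x - y + z) \<le> norm (x - y) + norm z" by (rule norm_triangle_ineq)
  moreover have "norm (x - y) \<le> norm x + norm y" by (rule norm_triangle_ineq4)
  ultimately show ?thesis by linarith
qed

lemma arithB:
  fixes a b c s N T :: real
  assumes s0: "0 \<le> s" and N: "N \<le> 3*(s * s)" and T: "T \<le> 3*(s * s)" and T0: "0 \<le> T"
  shows "\<bar>a\<bar> * s + \<bar>b\<bar>*N + \<bar>c\<bar>*T * s \<le> (\<bar>a\<bar> + 3*\<bar>b\<bar> + 3*\<bar>c\<bar>) * (1 + s)^3"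
proof -
  have e: "(1 + s)^3 = 1 + 3 * s + 3*(s * s) + s * s * s" by (simp add: power3_eq_cube algebra_simps)
  have q1: "s \<le> (1+s)^3" unfolding e using s0 by (simp add: add_increasing)
  have q2: "s * s \<le> (1+s)^3" unfolding e using s0 by (simp add: add_increasing)
  have q3: "s * s * s \<le> (1+s)^3" unfolding e using s0 by (simp add: add_increasing)
  have t1: "\<bar>a\<bar> * s \<le> \<bar>a\<bar>*(1+s)^3" by (rule mult_left_mono[OF q1]) simp
  have "N \<le> 3*(1+s)^3" using N q2 by linarith
  hence t2: "\<bar>b\<bar>*N \<le> \<bar>b\<bar>*(3*(1+s)^3)" by (rule mult_left_mono) simp
  have "T * s \<le> (3*(s * s)) * s" by (rule mult_right_mono[OF T s0])
  hence "T * s \<le> 3*(1+s)^3" using q3 by (simp add: mult.assoc)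
  hence t3: "\<bar>c\<bar>*(T * s) \<le> \<bar>c\<bar>*(3*(1+s)^3)" by (rule mult_left_mono) simp
  show ?thesis using t1 t2 t3 by (simp add: algebra_simps)
qed

lemma S_bound:
  fixes A :: "real^3^3"
  shows "norm (ldg_S a b c A) \<le> (\<bar>a\<bar> + 3*\<bar>b\<bar> + 3*\<bar>c\<bar>) * (1 + norm A)^3"
proof -
  define s where "s = norm A"
  define t where "t = trace (A ** A)"
  have s0: "0 \<le> s" unfolding s_def by simp
  have nAA: "norm (A ** A) \<le> s * s" unfolding s_def by (rule mult_norm)
  have tA: "\<bar>t\<bar> \<le> 3 * (s * s)" using trace_abs[of "A ** A"] nAA unfolding t_def by linarith
  have "norm (A ** A - (t / 3) *\<^sub>R (mat 1 :: real^3^3)) \<le> norm (A ** A) + norm ((t / 3) *\<^sub>R (mat 1 :: real^3^3))"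
    by (rule norm_triangle_ineq4)
  also have "\<dots> = norm (A ** A) + \<bar>t\<bar>/3 * norm (mat 1 :: real^3^3)" by simp
  also have "\<dots> \<le> s * s + (3*(s * s))/3 * 2"
    by (intro add_mono nAA mult_mono divide_right_mono tA norm_id) simp_all
  finally have N: "norm (A ** A - (t / 3) *\<^sub>R (mat 1 :: real^3^3)) \<le> 3*(s * s)" by simp
  have "norm (ldg_S a b c A) \<le> norm (a *\<^sub>R A) + norm (b *\<^sub>R (A ** A - (t / 3) *\<^sub>R mat 1)) + norm ((c * t) *\<^sub>R A)"
    unfolding ldg_S_def t_def by (rule norm3)
  also have "\<dots> = \<bar>a\<bar> * s + \<bar>b\<bar>*norm (A ** A - (t / 3) *\<^sub>R (mat 1 :: real^3^3)) + \<bar>c\<bar>*\<bar>t\<bar> * s"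
    unfolding s_def by (simp only: norm_scaleR abs_mult)
  also have "\<dots> \<le> (\<bar>a\<bar> + 3*\<bar>b\<bar> + 3*\<bar>c\<bar>) * (1 + s)^3"
    by (rule arithB[OF s0 N tA abs_ge_zero])
  finally show ?thesis unfolding s_def .
qed

lemma f_lower:
  assumes "sym_mat Q"
  shows "ldg_f a b c A0 Q \<ge> A0 + a/2 * norm Q^2 - \<bar>b\<bar> * norm Q^3 + c/4 * norm Q^4"
proof -
  define s where "s = norm Q"
  define x where "x = trace (Q ** Q ** Q)"
  have t: "trace (Q ** Q) = s^2" unfolding s_def using tr_sym[OF assms] .
  have "\<bar>x\<bar> \<le> 3 * norm (Q ** Q ** Q)" unfolding x_def by (rule trace_abs)
  also have "norm (Q ** Q ** Q) \<le> norm (Q ** Q) * norm Q" by (rule mult_norm)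
  also have "\<dots> \<le> (s * s) * s" unfolding s_def by (rule mult_right_mono[OF mult_norm norm_ge_zero])
  finally have t3: "\<bar>x\<bar> \<le> 3 * ((s * s) * s)" by simp
  have "b/3 * x \<le> \<bar>b/3 * x\<bar>" by (rule abs_ge_self)
  also have "\<dots> = \<bar>b\<bar>/3 * \<bar>x\<bar>" by (simp add: abs_mult)
  also have "\<dots> \<le> \<bar>b\<bar>/3 * (3 * ((s * s) * s))" by (rule mult_left_mono[OF t3]) simp
  also have "\<dots> = \<bar>b\<bar> * s^3" by (simp add: power3_eq_cube)
  finally have bx: "b/3 * x \<le> \<bar>b\<bar> * s^3" .
  have f: "ldg_f a b c A0 Q = a/2 * s^2 - b/3 * x + c/4 * s^4 + A0"
    unfolding ldg_f_def t x_def by simp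
  show ?thesis unfolding s_def[symmetric] f using bx by linarith
qed

lemma key:
  fixes A B :: "real^3^3"
  assumes k0: "\<kappa> > 0"
    and rlow: "\<forall>Q. sym_mat Q \<longrightarrow> ldg_r a b c A0 Q \<ge> \<kappa> * (1 + norm Q)^2"
    and fpos: "\<forall>Q. sym_mat Q \<longrightarrow> ldg_f a b c A0 Q > 0"
    and sA: "sym_mat A" and sB: "sym_mat B" and le: "norm A \<le> norm B"
  shows "norm (ldg_P a b c A0 B - ldg_P a b c A0 A) \<le>
     ((\<bar>a\<bar> + 6*\<bar>b\<bar> + 9*\<bar>c\<bar>) / \<kappa> + 2 * (3*\<bar>a\<bar> + 3*\<bar>b\<bar> + 9*\<bar>c\<bar>) * (\<bar>a\<bar> + 3*\<bar>b\<bar> + 3*\<bar>c\<bar>) / \<kappa>^3) * norm (B - A)"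
proof -
  define K1 where "K1 = \<bar>a\<bar> + 6*\<bar>b\<bar> + 9*\<bar>c\<bar>"
  define K2 where "K2 = 3*\<bar>a\<bar> + 3*\<bar>b\<bar> + 9*\<bar>c\<bar>"
  define K3 where "K3 = \<bar>a\<bar> + 3*\<bar>b\<bar> + 3*\<bar>c\<bar>"
  have K10: "K1 \<ge> 0" unfolding K1_def by simp
  have K20: "K2 \<ge> 0" unfolding K2_def by simp
  have K30: "K3 \<ge> 0" unfolding K3_def by simp
  define \<rho> where "\<rho> = 1 + norm B"
  define \<sigma> where "\<sigma> = 1 + norm A"
  define d where "d = norm (B - A)"
  define SA where "SA = ldg_S a b c A"
  define SB where "SB = ldg_S a b c B"
  define rA where "rA = ldg_r a b c A0 A"
  define rB where "rB = ldg_r a b c A0 B"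
  have d0: "d \<ge> 0" unfolding d_def by simp
  have r1: "1 \<le> \<rho>" unfolding \<rho>_def by simp
  have s1: "1 \<le> \<sigma>" unfolding \<sigma>_def by simp
  have sr: "\<sigma> \<le> \<rho>" unfolding \<rho>_def \<sigma>_def using le by simp
  have nA: "norm A \<le> \<rho>" unfolding \<rho>_def using le by simp
  have nB: "norm B \<le> \<rho>" unfolding \<rho>_def by simp
  have rAl: "rA \<ge> \<kappa> * \<sigma>^2" unfolding rA_def \<sigma>_def by (rule rlow[rule_format, OF sA])
  have rBl: "rB \<ge> \<kappa> * \<rho>^2" unfolding rB_def \<rho>_def by (rule rlow[rule_format, OF sB])
  have krr: "\<kappa> * \<rho>^2 > 0" by (intro mult_pos_pos k0) (use r1 in simp)
  have kss: "\<kappa> * \<sigma>^2 > 0" by (intro mult_pos_pos k0) (use s1 in simp)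
  have rA0: "rA > 0" using rAl kss by linarith
  have rB0: "rB > 0" using rBl krr by linarith
  have rA2: "rA^2 = 2 * ldg_f a b c A0 A" unfolding rA_def ldg_r_def
    by (rule real_sqrt_pow2) (use fpos[rule_format, OF sA] in simp)
  have rB2: "rB^2 = 2 * ldg_f a b c A0 B" unfolding rB_def ldg_r_def
    by (rule real_sqrt_pow2) (use fpos[rule_format, OF sB] in simp)
  have SD: "norm (SB - SA) \<le> K1 * \<rho>^2 * d"
    unfolding K1_def d_def SA_def SB_def by (rule S_diff[OF nA nB r1])
  have FD: "\<bar>ldg_f a b c A0 B - ldg_f a b c A0 A\<bar> \<le> K2 * \<rho>^3 * d"
    unfolding K2_def d_def by (rule f_diff[OF nA nB r1])
  have SAb: "norm SA \<le> K3 * \<sigma>^3" unfolding K3_def \<sigma>_def SA_def by (rule S_bound)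
  have eq0: "(1/rB) *\<^sub>R (SB - SA) + (1/rB - 1/rA) *\<^sub>R SA = (1/rB) *\<^sub>R SB - (1/rA) *\<^sub>R SA"
    by (simp add: scaleR_diff_right scaleR_diff_left)
  have eq: "ldg_P a b c A0 B - ldg_P a b c A0 A = (1/rB) *\<^sub>R (SB - SA) + (1/rB - 1/rA) *\<^sub>R SA"
    unfolding eq0 unfolding ldg_P_def rA_def rB_def SA_def SB_def by (rule refl)
  have tri: "norm (ldg_P a b c A0 B - ldg_P a b c A0 A) \<le> (1/rB) * norm (SB - SA) + \<bar>1/rB - 1/rA\<bar> * norm SA"
  proof -
    have "norm (ldg_P a b c A0 B - ldg_P a b c A0 A) \<le> norm ((1/rB) *\<^sub>R (SB - SA)) + norm ((1/rB - 1/rA) *\<^sub>R SA)"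
      unfolding eq by (rule norm_triangle_ineq)
    also have "\<dots> = \<bar>1/rB\<bar> * norm (SB - SA) + \<bar>1/rB - 1/rA\<bar> * norm SA" by (simp only: norm_scaleR)
    also have "\<bar>1/rB\<bar> = 1/rB" using rB0 by simp
    finally show ?thesis .
  qed
  have T1: "(1/rB) * norm (SB - SA) \<le> K1 / \<kappa> * d"
  proof -
    have "K1 * \<rho>^2 * d = (K1 / \<kappa> * d) * (\<kappa> * \<rho>^2)" using k0 by (simp add: field_simps)
    also have "\<dots> \<le> (K1 / \<kappa> * d) * rB"
      by (rule mult_left_mono[OF rBl]) (use K10 d0 k0 in simp)
    finally have "norm (SB - SA) \<le> (K1 / \<kappa> * d) * rB" using SD by linarith
    hence "norm (SB - SA) / rB \<le> K1 / \<kappa> * d" using rB0 by (simp add: pos_divide_le_eq)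
    thus ?thesis by simp
  qed
  have T2: "\<bar>1/rB - 1/rA\<bar> * norm SA \<le> 2 * K2 * K3 / \<kappa>^3 * d"
  proof -
    define X where "X = \<bar>rA - rB\<bar>"
    have X0: "X \<ge> 0" unfolding X_def by simp
    have "1/rB - 1/rA = (rA - rB) / (rA * rB)" using rA0 rB0 by (simp add: field_simps)
    hence e1: "\<bar>1/rB - 1/rA\<bar> = X / (rA * rB)" unfolding X_def using rA0 rB0 by simp
    have "rA^2 - rB^2 = (rA - rB) * (rA + rB)" by (simp add: power2_eq_square algebra_simps)
    hence "\<bar>rA^2 - rB^2\<bar> = X * (rA + rB)" unfolding X_def using rA0 rB0 by (simp add: abs_mult)
    moreover have "\<bar>rA^2 - rB^2\<bar> = 2 * \<bar>ldg_f a b c A0 B - ldg_f a b c A0 A\<bar>" unfolding rA2 rB2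
      by (simp only: abs_minus_commute[of "ldg_f a b c A0 B"] right_diff_distrib[symmetric] abs_mult abs_numeral)
    ultimately have "X * (rA + rB) = 2 * \<bar>ldg_f a b c A0 B - ldg_f a b c A0 A\<bar>" by simp
    also have "\<dots> \<le> 2 * (K2 * \<rho>^3 * d)" by (rule mult_left_mono[OF FD]) simp
    finally have Xa: "X * (rA + rB) \<le> 2 * (K2 * \<rho>^3 * d)" .
    have "X * (\<kappa> * \<rho>^2) \<le> X * (rA + rB)" by (rule mult_left_mono[OF _ X0]) (use rBl rA0 in linarith)
    hence "X * (\<kappa> * \<rho>^2) \<le> 2 * (K2 * \<rho>^3 * d)" using Xa by linarith
    moreover have "2 * (K2 * \<rho>^3 * d) = (2 * K2 * \<rho> * d / \<kappa>) * (\<kappa> * \<rho>^2)"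
      using k0 by (simp add: power2_eq_square power3_eq_cube field_simps)
    ultimately have "X * (\<kappa> * \<rho>^2) \<le> (2 * K2 * \<rho> * d / \<kappa>) * (\<kappa> * \<rho>^2)" by simp
    hence Xc: "X \<le> 2 * K2 * \<rho> * d / \<kappa>" using krr by (simp only: mult_le_cancel_right_pos)
    have "X * norm SA \<le> (2 * K2 * \<rho> * d / \<kappa>) * (K3 * \<sigma>^3)"
      by (rule mult_mono[OF Xc SAb]) (use K20 d0 k0 r1 in simp_all)
    also have "\<dots> = (2 * K2 * K3 * d / \<kappa>^3) * (\<kappa>^2 * \<sigma>^2 * (\<rho> * \<sigma>))"
      using k0 by (simp add: field_simps power2_eq_square power3_eq_cube)
    also have "\<dots> \<le> (2 * K2 * K3 * d / \<kappa>^3) * (\<kappa>^2 * \<sigma>^2 * (\<rho> * \<rho>))"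
    proof (rule mult_left_mono)
      have "\<rho> * \<sigma> \<le> \<rho> * \<rho>" by (rule mult_left_mono[OF sr]) (use r1 in simp)
      thus "\<kappa>^2 * \<sigma>^2 * (\<rho> * \<sigma>) \<le> \<kappa>^2 * \<sigma>^2 * (\<rho> * \<rho>)" by (rule mult_left_mono) simp
      show "0 \<le> 2 * K2 * K3 * d / \<kappa>^3" using K20 K30 d0 k0 by simp
    qed
    also have "\<dots> = (2 * K2 * K3 * d / \<kappa>^3) * ((\<kappa> * \<sigma>^2) * (\<kappa> * \<rho>^2))"
      by (simp add: power2_eq_square algebra_simps)
    also have "\<dots> \<le> (2 * K2 * K3 * d / \<kappa>^3) * (rA * rB)"
    proof (rule mult_left_mono)
      show "(\<kappa> * \<sigma>^2) * (\<kappa> * \<rho>^2) \<le> rA * rB" by (rule mult_mono[OF rAl rBl]) (use rA0 kss krr in simp_all)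
      show "0 \<le> 2 * K2 * K3 * d / \<kappa>^3" using K20 K30 d0 k0 by simp
    qed
    finally have "X * norm SA \<le> (2 * K2 * K3 * d / \<kappa>^3) * (rA * rB)" .
    hence "X * norm SA / (rA * rB) \<le> 2 * K2 * K3 * d / \<kappa>^3" using rA0 rB0 by (simp add: pos_divide_le_eq)
    thus ?thesis unfolding e1 by simp
  qed
  have "norm (ldg_P a b c A0 B - ldg_P a b c A0 A) \<le> K1 / \<kappa> * d + 2 * K2 * K3 / \<kappa>^3 * d"
    using tri T1 T2 by linarith
  also have "\<dots> = (K1 / \<kappa> + 2 * K2 * K3 / \<kappa>^3) * d" by (simp add: algebra_simps)
  finally show ?thesis unfolding K1_def K2_def K3_def d_def .
qed

lemma poly_big:
  fixes s :: real
  assumes c: "c > 0" and A0: "A0 > 0" and s: "s \<ge> 1 + (4*\<bar>a\<bar> + 8*\<bar>b\<bar>) / c"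
  shows "A0 + a/2 * s^2 - \<bar>b\<bar> * s^3 + c/4 * s^4 \<ge> c/128 * (1 + s)^4"
proof -
  have q0: "(4*\<bar>a\<bar> + 8*\<bar>b\<bar>) / c \<ge> 0" using c by simp
  have s1: "s \<ge> 1" using s q0 by linarith
  have "(4*\<bar>a\<bar> + 8*\<bar>b\<bar>) / c \<le> s - 1" using s by linarith
  hence "4*\<bar>a\<bar> + 8*\<bar>b\<bar> \<le> (s - 1) * c" using c by (simp add: pos_divide_le_eq)
  moreover have "(s - 1) * c \<le> s * c" using c by simp
  ultimately have sc: "4*\<bar>a\<bar> + 8*\<bar>b\<bar> \<le> s * c" by linarith
  have s30: "0 \<le> s^3" using s1 by simp
  have "(4*\<bar>a\<bar> + 8*\<bar>b\<bar>) * s^3 \<le> (s * c) * s^3" by (rule mult_right_mono[OF sc s30])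
  moreover have "(s * c) * s^3 = c * s^4" by (simp add: power3_eq_cube power4_eq_xxxx)
  ultimately have h1: "(4*\<bar>a\<bar> + 8*\<bar>b\<bar>) * s^3 \<le> c * s^4" by simp
  have "s^2 \<le> s^3" using s1 by (simp add: power_increasing)
  hence h2: "\<bar>a\<bar> * s^2 \<le> \<bar>a\<bar> * s^3" by (rule mult_left_mono) simp
  have h3: "- \<bar>a\<bar> * s^2 \<le> a * s^2" by (rule mult_right_mono) simp_all
  have "(1 + s)^4 \<le> (2 * s)^4" using s1 by (intro power_mono) simp_all
  moreover have "(2 * s)^4 = 16 * s^4" by simp
  ultimately have h4: "(1 + s)^4 \<le> 16 * s^4" by simp
  have h5: "c * (1 + s)^4 \<le> c * (16 * s^4)" by (rule mult_left_mono[OF h4]) (use c in simp)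
  show ?thesis using h1 h2 h3 h5 A0 by (simp add: algebra_simps)
qed

lemma poly_small:
  fixes s :: real
  assumes c: "c > 0" and A0: "A0 > 0" and s0: "0 \<le> s" and s: "s \<le> R"
  shows "A0 + a/2 * s^2 - \<bar>b\<bar> * s^3 + c/4 * s^4 \<ge> - (\<bar>a\<bar> * R^2 + \<bar>b\<bar> * R^3)"
proof -
  have p2: "s^2 \<le> R^2" by (rule power_mono[OF s s0])
  have p3: "s^3 \<le> R^3" by (rule power_mono[OF s s0])
  have h1: "\<bar>a\<bar> * s^2 \<le> \<bar>a\<bar> * R^2" by (rule mult_left_mono[OF p2]) simp
  have h2: "\<bar>b\<bar> * s^3 \<le> \<bar>b\<bar> * R^3" by (rule mult_left_mono[OF p3]) simp
  have h3: "- \<bar>a\<bar> * s^2 \<le> a * s^2" by (rule mult_right_mono) simp_all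
  have h4: "0 \<le> c * s^4" using c by simp
  have h5: "0 \<le> \<bar>a\<bar> * s^2" by simp
  have h6: "0 \<le> \<bar>a\<bar> * R^2" by simp
  show ?thesis using h1 h2 h3 h4 h5 h6 A0 by linarith
qed

theorem theorem4p11:
  fixes a b c A0 :: real
  assumes "c > 0" and "A0 > 0"
    and "(INF Q \<in> {Q. sym_mat Q}. ldg_f a b c A0 Q) > 0"
  shows "\<exists>L>0. \<forall>Q dQ. sym_mat Q \<longrightarrow> sym_mat dQ \<longrightarrow>
           frob (ldg_P a b c A0 (Q + dQ) - ldg_P a b c A0 Q) \<le> L * frob dQ"
proof -
  note c = assms(1) and A0 = assms(2)
  define m where "m = (INF Q \<in> {Q. sym_mat Q}. ldg_f a b c A0 Q)"
  have m0: "m > 0" using assms(3) unfolding m_def .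
  define R where "R = 1 + (4*\<bar>a\<bar> + 8*\<bar>b\<bar>) / c"
  have R1: "R \<ge> 1" unfolding R_def using c by simp
  have glow: "ldg_f a b c A0 Q \<ge> A0 + a/2 * norm Q^2 - \<bar>b\<bar> * norm Q^3 + c/4 * norm Q^4" if "sym_mat Q" for Q
    using f_lower[OF that] .
  have bdd: "ldg_f a b c A0 Q \<ge> - (\<bar>a\<bar> * R^2 + \<bar>b\<bar> * R^3)" if "sym_mat Q" for Q
  proof (cases "norm Q \<le> R")
    case True thus ?thesis using glow[OF that] poly_small[OF c A0 norm_ge_zero True, where a=a and b=b] by linarith
  next
    case False
    hence "A0 + a/2 * norm Q^2 - \<bar>b\<bar> * norm Q^3 + c/4 * norm Q^4 \<ge> c/128 * (1 + norm Q)^4"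
      using poly_big[OF c A0, where s="norm Q" and a=a and b=b] unfolding R_def by simp
    moreover have "c/128 * (1 + norm Q)^4 \<ge> 0" using c by simp
    moreover have "- (\<bar>a\<bar> * R^2 + \<bar>b\<bar> * R^3) \<le> 0"
    proof -
      have "0 \<le> \<bar>a\<bar> * R^2" by simp
      moreover have "0 \<le> \<bar>b\<bar> * R^3" using R1 by simp
      ultimately show ?thesis by linarith
    qed
    ultimately show ?thesis using glow[OF that] by linarith
  qed
  have fm: "ldg_f a b c A0 Q \<ge> m" if "sym_mat Q" for Q
    unfolding m_def
  proof (rule cINF_lower)
    show "bdd_below ((\<lambda>Q. ldg_f a b c A0 Q) ` {Q. sym_mat Q})"
      by (rule bdd_belowI2[where m="- (\<bar>a\<bar> * R^2 + \<bar>b\<bar> * R^3)"]) (use bdd in auto)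
  qed (use that in simp)
  define k0 where "k0 = min (c/128) (m / (1+R)^4)"
  have k00: "k0 > 0" unfolding k0_def using c m0 R1 by simp
  have flow: "ldg_f a b c A0 Q \<ge> k0 * (1 + norm Q)^4" if "sym_mat Q" for Q
  proof (cases "norm Q \<le> R")
    case True
    have "(1 + norm Q)^4 \<le> (1+R)^4" using True by (intro power_mono) auto
    hence "k0 * (1 + norm Q)^4 \<le> m / (1+R)^4 * (1+R)^4"
      unfolding k0_def using m0 R1 by (intro mult_mono) auto
    also have "\<dots> = m" using R1 by simp
    finally show ?thesis using fm[OF that] by linarith
  next
    case False
    hence "A0 + a/2 * norm Q^2 - \<bar>b\<bar> * norm Q^3 + c/4 * norm Q^4 \<ge> c/128 * (1 + norm Q)^4"
      using poly_big[OF c A0, where s="norm Q" and a=a and b=b] unfolding R_def by simp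
    moreover have "k0 * (1 + norm Q)^4 \<le> c/128 * (1 + norm Q)^4"
    proof (rule mult_right_mono)
      show "k0 \<le> c/128" unfolding k0_def by (rule min.cobounded1)
    qed simp
    ultimately show ?thesis using glow[OF that] by linarith
  qed
  define \<kappa> where "\<kappa> = sqrt (2 * k0)"
  have kp: "\<kappa> > 0" unfolding \<kappa>_def using k00 by simp
  have fpos: "ldg_f a b c A0 Q > 0" if "sym_mat Q" for Q using fm[OF that] m0 by linarith
  have rlow: "ldg_r a b c A0 Q \<ge> \<kappa> * (1 + norm Q)^2" if "sym_mat Q" for Q
  proof -
    have "\<kappa> * (1 + norm Q)^2 = sqrt (2 * (k0 * (1 + norm Q)^4))"
    proof -
      have "sqrt ((1 + norm Q)^4) = sqrt (((1 + norm Q)^2)^2)" by simp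
      also have "\<dots> = (1 + norm Q)^2" by (simp only: real_sqrt_abs abs_power2)
      finally have "sqrt ((1 + norm Q)^4) = (1 + norm Q)^2" .
      moreover have "sqrt (2 * (k0 * (1 + norm Q)^4)) = sqrt (2 * k0) * sqrt ((1 + norm Q)^4)"
        by (simp add: real_sqrt_mult)
      ultimately show ?thesis unfolding \<kappa>_def by simp
    qed
    also have "\<dots> \<le> ldg_r a b c A0 Q" unfolding ldg_r_def using flow[OF that] by simp
    finally show ?thesis .
  qed
  define L where "L = (\<bar>a\<bar> + 6*\<bar>b\<bar> + 9*\<bar>c\<bar>) / \<kappa> + 2 * (3*\<bar>a\<bar> + 3*\<bar>b\<bar> + 9*\<bar>c\<bar>) * (\<bar>a\<bar> + 3*\<bar>b\<bar> + 3*\<bar>c\<bar>) / \<kappa>^3"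
  have L0: "L > 0"
  proof -
    have ca: "\<bar>c\<bar> = c" using c by simp
    have "0 \<le> \<bar>a\<bar>" "0 \<le> \<bar>b\<bar>" by simp_all
    hence K1p: "0 < \<bar>a\<bar> + 6*\<bar>b\<bar> + 9*\<bar>c\<bar>" using ca c by linarith
    have t1: "0 < (\<bar>a\<bar> + 6*\<bar>b\<bar> + 9*\<bar>c\<bar>) / \<kappa>" by (rule divide_pos_pos[OF K1p kp])
    have "0 \<le> 2 * (3*\<bar>a\<bar> + 3*\<bar>b\<bar> + 9*\<bar>c\<bar>) * (\<bar>a\<bar> + 3*\<bar>b\<bar> + 3*\<bar>c\<bar>)" by simp
    hence t2: "0 \<le> 2 * (3*\<bar>a\<bar> + 3*\<bar>b\<bar> + 9*\<bar>c\<bar>) * (\<bar>a\<bar> + 3*\<bar>b\<bar> + 3*\<bar>c\<bar>) / \<kappa>^3"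
      using kp by simp
    show ?thesis unfolding L_def using t1 t2 by linarith
  qed
  show ?thesis
  proof (intro exI[of _ L] conjI allI impI L0)
    fix Q dQ :: "real^3^3"
    assume sQ: "sym_mat Q" and sd: "sym_mat dQ"
    have sQd: "sym_mat (Q + dQ)" using sym_add[OF sQ sd] .
    have rlow': "\<forall>Q. sym_mat Q \<longrightarrow> ldg_r a b c A0 Q \<ge> \<kappa> * (1 + norm Q)^2" using rlow by blast
    have fpos': "\<forall>Q. sym_mat Q \<longrightarrow> ldg_f a b c A0 Q > 0" using fpos by blast
    note K = key[OF kp rlow' fpos', folded L_def]
    have "norm (ldg_P a b c A0 (Q + dQ) - ldg_P a b c A0 Q) \<le> L * norm dQ"
    proof (cases "norm Q \<le> norm (Q + dQ)")
      case True
      from K[OF sQ sQd True] show ?thesis by simp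
    next
      case False
      hence "norm (Q + dQ) \<le> norm Q" by simp
      from K[OF sQd sQ this] have "norm (ldg_P a b c A0 Q - ldg_P a b c A0 (Q + dQ)) \<le> L * norm (Q - (Q + dQ))" .
      thus ?thesis by (simp add: norm_minus_commute)
    qed
    thus "frob (ldg_P a b c A0 (Q + dQ) - ldg_P a b c A0 Q) \<le> L * frob dQ"
      by (simp only: frob_eq_norm)
  qed
qed

end
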